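(* Let $k\geq 3$ be an integer. Every strongly connected tournament on $2k-1$ vertices contains a subdivision of $B(k,1;1)$.
   Context: A tournament is an orientation of a complete graph. A digraph is strongly connected if every vertex can reach every other vertex by a directed path. For positive integers $k_1,k_2,k_3$, a digraph $D$ contains a subdivision of $B(k_1,k_2;k_3)$ if there exist distinct vertices $x,y$ of $D$ and three pairwise internally vertex-disjoint directed paths in $D$: two from $x$ to $y$, of lengths (numbers of arcs) at least $k_1$ and at least $k_2$ respectively, and one from $y$ to $x$ of length at least $k_3$. *)

theory Defs
  imports Main
begin

definition tournament :: "'a set \<Rightarrow> ('a \<times> 'a) set \<Rightarrow> bool" where
  "tournament V A \<longleftrightarrow> A \<subseteq> V \<times> V \<and> (\<forall>v. (v, v) \<notin> A) \<and>
     (\<forall>u\<in>V. \<forall>v\<in>V. u \<noteq> v \<longrightarrow> ((u, v) \<in> A \<longleftrightarrow> (v, u) \<notin> A))"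

definition strongly_connected :: "'a set \<Rightarrow> ('a \<times> 'a) set \<Rightarrow> bool" where
  "strongly_connected V A \<longleftrightarrow> (\<forall>u\<in>V. \<forall>v\<in>V. (u, v) \<in> (A \<inter> V \<times> V)\<^sup>*)"

text \<open>A directed path as a list of distinct vertices, consecutive ones joined by arcs;
  its length is the number of arcs, i.e. length p - 1.\<close>
definition dpath :: "('a \<times> 'a) set \<Rightarrow> 'a list \<Rightarrow> bool" where
  "dpath A p \<longleftrightarrow> 2 \<le> length p \<and> distinct p \<and> (\<forall>i. Suc i < length p \<longrightarrow> (p ! i, p ! Suc i) \<in> A)"

definition interior :: "'a list \<Rightarrow> 'a set" where
  "interior p = set (butlast (tl p))"

definition contains_subdivision_B :: "'a set \<Rightarrow> ('a \<times> 'a) set \<Rightarrow> nat \<Rightarrow> nat \<Rightarrow> nat \<Rightarrow> bool" where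
  "contains_subdivision_B V A k1 k2 k3 \<longleftrightarrow>
     (\<exists>x\<in>V. \<exists>y\<in>V. \<exists>P1 P2 P3. x \<noteq> y \<and>
        dpath A P1 \<and> hd P1 = x \<and> last P1 = y \<and> k1 \<le> length P1 - 1 \<and>
        dpath A P2 \<and> hd P2 = x \<and> last P2 = y \<and> k2 \<le> length P2 - 1 \<and>
        dpath A P3 \<and> hd P3 = y \<and> last P3 = x \<and> k3 \<le> length P3 - 1 \<and>
        set P1 \<subseteq> V \<and> set P2 \<subseteq> V \<and> set P3 \<subseteq> V \<and>
        interior P1 \<inter> interior P2 = {} \<and> interior P1 \<inter> interior P3 = {} \<and>
        interior P2 \<inter> interior P3 = {})"

end

theory Submission imports Defs begin

definition cyc :: "('a \<times> 'a) set \<Rightarrow> 'a list \<Rightarrow> bool" where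
  "cyc A c \<longleftrightarrow> distinct c \<and> c \<noteq> [] \<and> successively (\<lambda>x y. (x,y) \<in> A) c \<and>
     (2 \<le> length c \<longrightarrow> (last c, hd c) \<in> A)"

lemma exit_arc:
  assumes "(a,b) \<in> R\<^sup>*" "a \<in> S" "b \<notin> S"
  shows "\<exists>s t. (s,t) \<in> R \<and> s \<in> S \<and> t \<notin> S"
  using assms by (induction rule: rtrancl_induct) auto

lemma t_asym: assumes "tournament V A" "(u,v) \<in> A" shows "(v,u) \<notin> A"
proof -
  have "u \<in> V" "v \<in> V" "u \<noteq> v" using assms unfolding tournament_def by auto
  then show ?thesis using assms unfolding tournament_def by blast
qed

lemma t_total: "tournament V A \<Longrightarrow> u \<in> V \<Longrightarrow> v \<in> V \<Longrightarrow> u \<noteq> v \<Longrightarrow> (u,v) \<notin> A \<Longrightarrow> (v,u) \<in> A"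
  unfolding tournament_def by blast

lemma t_inV: "tournament V A \<Longrightarrow> (u,v) \<in> A \<Longrightarrow> u \<in> V \<and> v \<in> V"
  unfolding tournament_def by blast

lemma cyc_insert:
  assumes c: "cyc A c" and v: "v \<notin> set c" and p: "1 \<le> p" "p \<le> length c" and a: "(c!(p-1), v) \<in> A"
    and b: "if p < length c then (v, c!p) \<in> A else (v, hd c) \<in> A"
  shows "cyc A (take p c @ v # drop p c)"
proof -
  have dc: "distinct c" and ne: "c \<noteq> []" and sc: "successively (\<lambda>x y. (x,y) \<in> A) c"
    and cl: "2 \<le> length c \<longrightarrow> (last c, hd c) \<in> A" using c by (auto simp: cyc_def)
  have c_eq: "c = take p c @ drop p c" by simp
  have "set (take p c) \<inter> set (drop p c) = {}" "distinct (take p c)" "distinct (drop p c)"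
    using dc distinct_append[of "take p c" "drop p c"] by auto
  then have d1: "distinct (take p c @ v # drop p c)" using v
    by (auto dest: in_set_takeD in_set_dropD)
  have s1: "successively (\<lambda>x y. (x,y) \<in> A) (take p c)" "successively (\<lambda>x y. (x,y) \<in> A) (drop p c)"
    using sc c_eq by (metis successively_append_iff)+
  have tne: "take p c \<noteq> []" using p ne by simp
  have lt: "last (take p c) = c!(p-1)" using p ne
    by (simp add: last_conv_nth min_def)
  have s2: "successively (\<lambda>x y. (x,y) \<in> A) (v # drop p c)"
  proof (cases "p < length c")
    case True
    then show ?thesis using s1 b by (simp add: successively_Cons hd_drop_conv_nth)
  next
    case False
    then show ?thesis by simp
  qed
  have s3: "successively (\<lambda>x y. (x,y) \<in> A) (take p c @ v # drop p c)"
    using s1 s2 tne lt a by (simp add: successively_append_iff)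
  have hd': "hd (take p c @ v # drop p c) = hd c" using tne ne p
    by (simp add: hd_append hd_take)
  have cl': "(last (take p c @ v # drop p c), hd c) \<in> A"
  proof (cases "p < length c")
    case True
    then have "last (take p c @ v # drop p c) = last c" by simp
    moreover have "2 \<le> length c" using True p by simp
    ultimately show ?thesis using cl by simp
  next
    case False
    then show ?thesis using b p by simp
  qed
  show ?thesis unfolding cyc_def using d1 s3 hd' cl' by simp
qed

lemma extend:
  assumes T: "tournament V A" and S: "strongly_connected V A"
    and c: "cyc A c" "set c \<subseteq> V" "set c \<noteq> V"
  shows "\<exists>c'. cyc A c' \<and> set c' \<subseteq> V \<and> length c' > length c"
proof (cases "\<exists>v \<in> V - set c. (\<exists>a\<in>set c. (a,v)\<in>A) \<and> (\<exists>b\<in>set c. (v,b)\<in>A)")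
  case True
  then obtain v a b where v: "v \<in> V" "v \<notin> set c" and a: "a \<in> set c" "(a,v)\<in>A"
    and b: "b\<in>set c" "(v,b)\<in>A" by blast
  have ne: "c \<noteq> []" using c by (auto simp: cyc_def)
  have hdc: "hd c \<in> set c" using ne by simp
  have "hd c \<noteq> v" using v hdc by auto
  then have "(hd c, v) \<in> A \<or> (v, hd c) \<in> A" using t_total[OF T, of "hd c" v] v hdc c(2) by blast
  then obtain p where p: "1 \<le> p" "p \<le> length c" "(c!(p-1), v) \<in> A"
    "if p < length c then (v, c!p) \<in> A else (v, hd c) \<in> A"
  proof
    assume h: "(hd c, v) \<in> A"
    from b obtain j where j: "j < length c" "(v, c!j) \<in> A" by (auto simp: in_set_conv_nth)
    define p where "p = (LEAST j. j < length c \<and> (v, c!j) \<in> A)"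
    have p1: "p < length c" "(v, c!p) \<in> A"
      using LeastI[of "\<lambda>j. j < length c \<and> (v, c!j) \<in> A", OF conjI[OF j]] p_def by auto
    have p0: "p \<noteq> 0"
    proof
      assume "p = 0"
      then have "(v, hd c) \<in> A" using p1 ne by (simp add: hd_conv_nth)
      then show False using h t_asym[OF T] by blast
    qed
    have "\<not> (p - 1 < length c \<and> (v, c!(p-1)) \<in> A)"
      using not_less_Least[of "p-1" "\<lambda>j. j < length c \<and> (v, c!j) \<in> A"] p0 p_def by auto
    then have "(v, c!(p-1)) \<notin> A" using p1 by auto
    moreover have "c!(p-1) \<in> V" "c!(p-1) \<noteq> v" using p1 c(2) v by (auto dest: nth_mem)
    ultimately have "(c!(p-1), v) \<in> A" using t_total[OF T] v by blast
    then show thesis using that[of p] p1 p0 by auto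
  next
    assume h: "(v, hd c) \<in> A"
    from a obtain j where j: "j < length c" "(c!j, v) \<in> A" by (auto simp: in_set_conv_nth)
    define q where "q = (GREATEST j. j < length c \<and> (c!j, v) \<in> A)"
    have bnd: "\<And>y. y < length c \<and> (c!y, v) \<in> A \<Longrightarrow> y \<le> length c" by simp
    have q1: "q < length c" "(c!q, v) \<in> A"
      using GreatestI_nat[of "\<lambda>j. j < length c \<and> (c!j, v) \<in> A", OF conjI[OF j] bnd] q_def by auto
    have q2: "\<And>y. y < length c \<Longrightarrow> (c!y, v) \<in> A \<Longrightarrow> y \<le> q"
      using Greatest_le_nat[of "\<lambda>j. j < length c \<and> (c!j, v) \<in> A", OF _ bnd] q_def by auto
    have "if Suc q < length c then (v, c!Suc q) \<in> A else (v, hd c) \<in> A"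
    proof (cases "Suc q < length c")
      case True
      then have "(c!Suc q, v) \<notin> A" using q2 by fastforce
      moreover have "c!Suc q \<in> V" "c!Suc q \<noteq> v" using True c(2) v by (auto dest: nth_mem)
      ultimately show ?thesis using True t_total[OF T] v by auto
    qed (use h in auto)
    then show thesis using that[of "Suc q"] q1 by auto
  qed
  have "cyc A (take p c @ v # drop p c)" using cyc_insert[OF c(1) v(2) p] .
  moreover have "set (take p c @ v # drop p c) \<subseteq> V" using c(2) v
    by (auto dest: in_set_takeD in_set_dropD)
  moreover have "length (take p c @ v # drop p c) > length c" using p by simp
  ultimately show ?thesis by blast
next
  case False
  have dich: "\<And>x a. x \<in> V \<Longrightarrow> x \<notin> set c \<Longrightarrow> a \<in> set c \<Longrightarrow> (x,a) \<in> A \<Longrightarrow> (\<forall>b\<in>set c. (x,b) \<in> A)"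
  proof -
    fix x a assume x: "x \<in> V" "x \<notin> set c" and a: "a \<in> set c" "(x,a) \<in> A"
    show "\<forall>b\<in>set c. (x,b) \<in> A"
    proof
      fix b assume b: "b \<in> set c"
      have "(b,x) \<notin> A" using False x a b by blast
      then show "(x,b) \<in> A" using t_total[OF T] x b c(2) by blast
    qed
  qed
  obtain c0 t where ct: "c = c0 # t" using c by (auto simp: cyc_def neq_Nil_conv)
  have c0V: "c0 \<in> V" using ct c(2) by auto
  obtain v where v: "v \<in> V" "v \<notin> set c" using c by blast
  have "(c0, v) \<in> (A \<inter> V \<times> V)\<^sup>*" using S c0V v unfolding strongly_connected_def by blast
  then have "\<exists>s t. (s,t) \<in> A \<inter> V \<times> V \<and> s \<in> set c \<and> t \<notin> set c"
    by (rule exit_arc) (use ct v in auto)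
  then obtain s t1 where st: "(s,t1) \<in> A \<inter> V \<times> V" "s \<in> set c" "t1 \<notin> set c"
    by blast
  define Ou where "Ou = {x \<in> V - set c. \<forall>a\<in>set c. (a,x) \<in> A}"
  have t1O: "t1 \<in> Ou"
  proof -
    have "(t1, s) \<notin> A" using st t_asym[OF T] by blast
    then have "\<not> (\<exists>a\<in>set c. (t1,a) \<in> A)" using dich st by blast
    then have "\<forall>a\<in>set c. (a,t1) \<in> A" using t_total[OF T] st c(2) by blast
    then show ?thesis using st Ou_def by auto
  qed
  have "(t1, c0) \<in> (A \<inter> V \<times> V)\<^sup>*" using S c0V st unfolding strongly_connected_def by blast
  then have "\<exists>s t. (s,t) \<in> A \<inter> V \<times> V \<and> s \<in> Ou \<and> t \<notin> Ou"
    by (rule exit_arc) (use t1O ct Ou_def in auto)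
  then obtain u w where uw: "(u,w) \<in> A \<inter> V \<times> V" "u \<in> Ou" "w \<notin> Ou"
    by blast
  have wc: "w \<notin> set c"
  proof
    assume "w \<in> set c"
    then have "(w,u) \<in> A" using uw Ou_def by auto
    then show False using uw t_asym[OF T] by blast
  qed
  have wI: "\<forall>a\<in>set c. (w,a) \<in> A"
  proof -
    have "w \<in> V" using uw by auto
    then obtain a where "a \<in> set c" "(a,w) \<notin> A" using uw wc Ou_def by auto
    moreover then have "a \<noteq> w" using wc by auto
    ultimately have "(w,a) \<in> A" using t_total[OF T] c(2) \<open>w \<in> V\<close> by blast
    then show ?thesis using dich \<open>w \<in> V\<close> wc \<open>a \<in> set c\<close> by blast
  qed
  have uO: "u \<in> V" "u \<notin> set c" "\<forall>a\<in>set c. (a,u) \<in> A" using uw Ou_def by auto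
  have uwne: "u \<noteq> w"
  proof
    assume "u = w"
    then have "(c0,u) \<in> A" "(u,c0) \<in> A" using uO wI ct by auto
    then show False using t_asym[OF T] by blast
  qed
  define c' where "c' = c0 # u # w # drop 1 t"
  have dc: "distinct c" "successively (\<lambda>x y. (x,y) \<in> A) c" and cl: "2 \<le> length c \<longrightarrow> (last c, hd c) \<in> A"
    using c by (auto simp: cyc_def)
  have sdt: "set (drop 1 t) \<subseteq> set t" by (rule set_drop_subset)
  have dt: "distinct t" "c0 \<notin> set t" using dc(1) ct by auto
  have dd: "distinct (drop 1 t)" using dt(1) by (rule distinct_drop)
  have nin: "c0 \<notin> set (drop 1 t)" "u \<notin> set (drop 1 t)" "w \<notin> set (drop 1 t)"
    using dt(2) uO(2) wc sdt ct by auto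
  have neq: "c0 \<noteq> u" "c0 \<noteq> w" using uO(2) wc ct by auto
  have d': "distinct c'" unfolding c'_def using dd nin neq uwne by simp
  have st0: "successively (\<lambda>x y. (x,y) \<in> A) t" using dc(2) ct by (cases t) auto
  then have "successively (\<lambda>x y. (x,y) \<in> A) (take 1 t @ drop 1 t)" by simp
  then have sdrop: "successively (\<lambda>x y. (x,y) \<in> A) (drop 1 t)"
    by (simp only: successively_append_iff)
  have s': "successively (\<lambda>x y. (x,y) \<in> A) c'"
  proof -
    have "successively (\<lambda>x y. (x,y) \<in> A) (w # drop 1 t)"
    proof (cases "drop 1 t = []")
      case False
      then have "hd (drop 1 t) \<in> set (drop 1 t)" by (rule hd_in_set)
      then have "hd (drop 1 t) \<in> set c" using ct sdt by auto
      then show ?thesis using sdrop wI False by (simp add: successively_Cons)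
    qed simp
    then show ?thesis unfolding c'_def using uO ct uw by (simp add: successively_Cons)
  qed
  have cl': "(last c', hd c') \<in> A"
  proof (cases "drop 1 t = []")
    case True
    then show ?thesis using wI ct unfolding c'_def by simp
  next
    case False
    then have "last c' = last c" "2 \<le> length c" unfolding c'_def using ct by (auto simp: last_drop)
    then show ?thesis using cl ct unfolding c'_def by simp
  qed
  have "cyc A c'" unfolding cyc_def using d' s' cl' c'_def by simp
  moreover have "set c' \<subseteq> V" unfolding c'_def using c(2) ct uO uw sdt by auto
  moreover have "length c' > length c" unfolding c'_def using ct by simp
  ultimately show ?thesis by blast
qed

lemma ham:
  assumes T: "tournament V A" and S: "strongly_connected V A" and fin: "finite V" and ne: "V \<noteq> {}"
  shows "\<exists>c. cyc A c \<and> set c = V"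
proof -
  have "n \<le> card V \<Longrightarrow> \<exists>c. cyc A c \<and> set c \<subseteq> V \<and> n \<le> length c" for n
  proof (induction n)
    case 0
    obtain v where "v \<in> V" using ne by blast
    then have "cyc A [v] \<and> set [v] \<subseteq> V" by (simp add: cyc_def)
    then show ?case by blast
  next
    case (Suc n)
    then obtain c where c: "cyc A c" "set c \<subseteq> V" "n \<le> length c" by auto
    show ?case
    proof (cases "Suc n \<le> length c")
      case True then show ?thesis using c by blast
    next
      case False
      then have "length c = n" using c by simp
      moreover have "card (set c) = length c" using c(1) by (simp add: cyc_def distinct_card)
      ultimately have "set c \<noteq> V" using Suc.prems by auto
      then obtain c' where "cyc A c'" "set c' \<subseteq> V" "length c' > length c"
        using extend[OF T S c(1,2)] by blast
      then show ?thesis using \<open>length c = n\<close> by (intro exI[of _ c']) auto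
    qed
  qed
  then obtain c where c: "cyc A c" "set c \<subseteq> V" "card V \<le> length c" by blast
  have "card (set c) = length c" using c(1) by (simp add: cyc_def distinct_card)
  then have "set c = V" using card_seteq[OF fin c(2)] c(3) by simp
  then show ?thesis using c by blast
qed

lemma cyc_nth:
  assumes "cyc A c" "2 \<le> length c" "i < length c"
  shows "(c!i, c!(Suc i mod length c)) \<in> A"
proof (cases "Suc i < length c")
  case True
  then show ?thesis using assms successively_nth[of "\<lambda>x y. (x,y) \<in> A" c i] by (simp add: cyc_def)
next
  case False
  then have "Suc i = length c" using assms by simp
  moreover have cne: "c \<noteq> []" using assms by auto
  moreover have "i = length c - 1" using \<open>Suc i = length c\<close> by simp
  ultimately have "c!i = last c" "c!(Suc i mod length c) = hd c"
    by (simp_all add: last_conv_nth hd_conv_nth)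
  then show ?thesis using assms by (simp add: cyc_def)
qed

lemma dpath_map_upt:
  assumes "a + 2 \<le> b" "inj_on g {a..<b}" "\<And>j. a \<le> j \<Longrightarrow> Suc j < b \<Longrightarrow> (g j, g (Suc j)) \<in> A"
  shows "dpath A (map g [a..<b])"
  unfolding dpath_def using assms by (auto simp: distinct_map nth_append)

lemma interior_map_upt:
  assumes "a + 2 \<le> b"
  shows "interior (map g [a..<b]) = g ` {Suc a..<b-1}"
proof -
  have "butlast [Suc a..<b] = [Suc a..<b-1]" using assms
    by (metis Suc_diff_1 butlast_snoc less_le_trans not_less_eq_eq upt_Suc_append zero_less_Suc le_add2 add_2_eq_Suc' le_Suc_ex)
  then show ?thesis unfolding interior_def by (simp add: map_butlast[symmetric] map_tl[symmetric])
qed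

lemma mod_inj:
  assumes "0 < (n::nat)" "a \<le> i" "i < j" "j < a + n" shows "i mod n \<noteq> j mod n"
proof
  assume "i mod n = j mod n"
  then have "j mod n = i mod n" by simp
  then have "n dvd j - i" using assms mod_eq_dvd_iff_nat[of i j n] by simp
  moreover have "0 < j - i" "j - i < n" using assms by auto
  ultimately show False using nat_dvd_not_less by blast
qed

theorem mainTheorem6:
  fixes V :: "'a set" and A :: "('a \<times> 'a) set" and k :: nat
  assumes "k \<ge> 3" and "finite V" and "card V = 2 * k - 1"
    and "tournament V A" and "strongly_connected V A"
  shows "contains_subdivision_B V A k 1 1"
proof -
  note T = assms(4)
  have "V \<noteq> {}" using assms(1,3) by auto
  then obtain c where c: "cyc A c" "set c = V" using ham[OF T assms(5,2)] by blast
  define n where "n = length c"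
  have n: "n = 2*k - 1" using c assms(3) distinct_card[of c] by (simp add: n_def cyc_def)
  have n5: "5 \<le> n" using n assms(1) by simp
  define f where "f i = c!(i mod n)" for i
  have fV: "f i \<in> V" for i using n5 c(2) by (auto simp: f_def n_def intro!: nth_mem mod_less_divisor)
  have farc: "(f i, f (Suc i)) \<in> A" for i
  proof -
    have "(c!(i mod n), c!(Suc (i mod n) mod n)) \<in> A"
      using cyc_nth[OF c(1), of "i mod n"] n5 mod_less_divisor[of n i] unfolding n_def by linarith
    then show ?thesis by (simp add: f_def mod_Suc_eq)
  qed
  have feq: "f i = f j \<longleftrightarrow> i mod n = j mod n" for i j
    using c(1) n5 unfolding f_def n_def cyc_def by (simp add: nth_eq_iff_index_eq)
  have finj: "inj_on f {a..<b}" if "b \<le> a + n" for a b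
  proof (rule inj_onI)
    fix i j assume ij: "i \<in> {a..<b}" "j \<in> {a..<b}" "f i = f j"
    show "i = j"
    proof (rule ccontr)
      assume "i \<noteq> j"
      then have "i < j \<or> j < i" by auto
      then show False using mod_inj[of n a] ij that n5 feq by (auto simp: less_imp_le) (metis mod_inj[of n a j i] neq0_conv n5 le_add_diff_inverse zero_less_numeral less_le_trans)
    qed
  qed
  show ?thesis
  proof (cases "\<exists>i. (f (i+2), f i) \<in> A")
    case True
    then obtain i where hi: "(f (i+2), f i) \<in> A" by blast
    define P1 where "P1 = map f [i+2..<i+n+1]"
    define P3 where "P3 = map f [i..<i+3]"
    define P2 where "P2 = [f (i+2), f i]"
    have xy: "f (i+2) \<noteq> f i" using feq mod_inj[of n i i "i+2"] n5 by auto
    have d1: "dpath A P1" unfolding P1_def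
      by (rule dpath_map_upt) (use n5 finj farc in auto)
    have d3: "dpath A P3" unfolding P3_def
      by (rule dpath_map_upt) (use n5 finj farc in auto)
    have d2: "dpath A P2" unfolding P2_def dpath_def using hi xy
      by (auto simp: less_Suc_eq)
    have fin: "f (i+n) = f i" by (simp add: f_def)
    have i1: "interior P1 = f ` {i+3..<i+n}" unfolding P1_def
      by (subst interior_map_upt) (use n5 in auto)
    have i3: "interior P3 = f ` {i+1..<i+2}" unfolding P3_def
      by (subst interior_map_upt) (use n5 in auto)
    have i2: "interior P2 = {}" unfolding P2_def interior_def by simp
    have "f ` ({i+3..<i+n} \<inter> {i+1..<i+2}) = f ` {i+3..<i+n} \<inter> f ` {i+1..<i+2}"
      by (rule inj_on_image_Int[OF finj[of "i+n" "i+1"]]) (use n5 in auto)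
    then have i13: "interior P1 \<inter> interior P3 = {}" using i1 i3 by auto
    have hl: "hd P1 = f (i+2)" "last P1 = f i" "length P1 = n - 1" "hd P3 = f i" "last P3 = f (i+2)"
      "length P3 = 3" "set P1 \<subseteq> V" "set P3 \<subseteq> V"
      unfolding P1_def P3_def using n5 fin fV
      by (auto simp: hd_map last_map)
    show ?thesis unfolding contains_subdivision_B_def
      apply (rule bexI[of _ "f (i+2)"], rule bexI[of _ "f i"])
        apply (rule exI[of _ P1], rule exI[of _ P2], rule exI[of _ P3])
      using xy d1 d2 d3 i13 i2 hl n n5 assms(1) fV
      by (auto simp: P2_def)
  next
    case False
    have h2: "(f i, f (i+2)) \<in> A" for i
    proof -
      have "f i \<noteq> f (i+2)" using feq mod_inj[of n i i "i+2"] n5 by auto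
      then show ?thesis using False t_total[OF T] fV by blast
    qed
    define P1 where "P1 = map (\<lambda>j. f (2*j)) [0..<k+1]"
    define P3 where "P3 = map (\<lambda>j. f (2*j+1)) [0..<k]"
    define P2 where "P2 = [f 0, f 1]"
    have ev: "(2*j) mod n = (if j = k then 1 else 2*j)" if "j \<le> k" for j
    proof (cases "j = k")
      case True
      then have "2*j = n + 1" using n n5 by simp
      then show ?thesis using True n5 by (simp add: mod_Suc)
    next
      case False
      then have "2*j < n" using that n n5 by simp
      then show ?thesis using False by simp
    qed
    have od: "(2*j+1) mod n = (if j = k - 1 then 0 else 2*j+1)" if "j < k" for j
    proof (cases "j = k - 1")
      case True
      then have "2*j+1 = n" using n n5 by simp
      then show ?thesis using True n5 by simp
    next
      case False
      then have "2*j+1 < n" using that n n5 by simp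
      then show ?thesis using False by simp
    qed
    have xy: "f 0 \<noteq> f 1" using feq n5 by auto
    have inj1: "inj_on (\<lambda>j. f (2*j)) {0..<k+1}"
    proof (rule inj_onI)
      fix a b assume ab: "a \<in> {0..<k+1}" "b \<in> {0..<k+1}" "f (2*a) = f (2*b)"
      then have "(2*a) mod n = (2*b) mod n" using feq by blast
      moreover have "a \<le> k" "b \<le> k" using ab by auto
      ultimately have "(if a = k then 1 else 2*a) = (if b = k then (1::nat) else 2*b)"
        using ev[of a] ev[of b] by simp
      then show "a = b" by (cases "a = k"; cases "b = k"; simp; presburger)
    qed
    have inj3: "inj_on (\<lambda>j. f (2*j+1)) {0..<k}"
    proof (rule inj_onI)
      fix a b assume ab: "a \<in> {0..<k}" "b \<in> {0..<k}" "f (2*a+1) = f (2*b+1)"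
      then have "(2*a+1) mod n = (2*b+1) mod n" using feq by blast
      moreover have "a < k" "b < k" using ab by auto
      ultimately have "(if a = k - 1 then 0 else 2*a+1) = (if b = k - 1 then (0::nat) else 2*b+1)"
        using od[of a] od[of b] by simp
      then show "a = b" by (cases "a = k - 1"; cases "b = k - 1"; simp)
    qed
    have d1: "dpath A P1" unfolding P1_def
      by (rule dpath_map_upt) (use assms(1) inj1 h2 in auto)
    have d3: "dpath A P3" unfolding P3_def
    proof (rule dpath_map_upt)
      show "\<And>j. 0 \<le> j \<Longrightarrow> Suc j < k \<Longrightarrow> (f (2 * j + 1), f (2 * Suc j + 1)) \<in> A"
        using h2 by (simp add: algebra_simps)
    qed (use assms(1) inj3 in auto)
    have d2: "dpath A P2" unfolding P2_def dpath_def using farc[of 0] xy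
      by (auto simp: less_Suc_eq)
    have l1: "last P1 = f 1" unfolding P1_def using ev[of k] feq n5 by simp
    have l3: "last P3 = f 0" unfolding P3_def using od[of "k-1"] feq assms(1) by (simp add: last_map)
    have i1: "interior P1 = (\<lambda>j. f (2*j)) ` {1..<k}" unfolding P1_def
      by (subst interior_map_upt) (use assms(1) in auto)
    have i3: "interior P3 = (\<lambda>j. f (2*j+1)) ` {1..<k-1}" unfolding P3_def
      by (subst interior_map_upt) (use assms(1) in auto)
    have i2: "interior P2 = {}" unfolding P2_def interior_def by simp
    have i13: "interior P1 \<inter> interior P3 = {}"
    proof -
      have "f (2*a) \<noteq> f (2*b+1)" if "a < k" "b < k - 1" for a b
      proof -
        have "(2*a) mod n = 2*a" "(2*b+1) mod n = 2*b+1" using that n by auto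
        moreover have "2*a \<noteq> 2*b+1" by presburger
        ultimately show ?thesis unfolding feq by simp
      qed
      then show ?thesis using i1 i3 by auto
    qed
    have hl: "hd P1 = f 0" "length P1 = k+1" "hd P3 = f 1"
      "length P3 = k" "set P1 \<subseteq> V" "set P3 \<subseteq> V"
      unfolding P1_def P3_def using assms(1) fV
      by (auto simp: hd_map)
    show ?thesis unfolding contains_subdivision_B_def
      apply (rule bexI[of _ "f 0"], rule bexI[of _ "f 1"])
        apply (rule exI[of _ P1], rule exI[of _ P2], rule exI[of _ P3])
      using xy d1 d2 d3 i13 i2 l1 l3 hl assms(1) fV
      by (auto simp: P2_def)
  qed
qed

end
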